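(* Let $\Omega$ be a finite set, let $\mathcal K$ be a finite nonempty set of gambles on $\Omega$, and let $\underline{P}_{\mathcal K}$ be a coherent lower prevision on $\mathcal K$. Let $\mathcal M=\{P: P(f)\ge\underline{P}_{\mathcal K}(f)\ \forall f\in\mathcal K\}$ be its credal set and $\underline{E}(h)=\min_{P\in\mathcal M}P(h)$ its natural extension. For $f\in\mathcal K$ let $\mathcal M_f=\{P\in\mathcal M: P(f)=\underline{E}(f)\}$ and let $\mathcal E_f$ be the set of extreme points of $\mathcal M_f$. Let $\underline{P}$ be any coherent lower prevision on the set of all gambles with $\underline{P}(f)=\underline{P}_{\mathcal K}(f)$ for all $f\in\mathcal K$ (an extension of $\underline{P}_{\mathcal K}$), and let $h$ be any gamble. Then: (i) $\underline{P}(h)\le\max_{P\in\mathcal M_f}P(h)$ for every $f\in\mathcal K$; (ii) $\underline{P}(h)\le\min_{f\in\mathcal K}\max_{P\in\mathcal M_f}P(h)$, and this inequality is tight: for every gamble $h$ there exists an extension $\underline{P}'$ of $\underline{P}_{\mathcal K}$ (a coherent lower prevision on all gambles agreeing with $\underline{P}_{\mathcal K}$ on $\mathcal K$) with $\underline{P}'(h)=\min_{f\in\mathcal K}\max_{P\in\mathcal M_f}P(h)$; (iii) $\underline{P}(h)\le\min_{f\in\mathcal K}\max_{E\in\mathcal E_f}E(h)$, and this inequality is also tight in the same sense.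
   Context: Gambles are real-valued functions on the finite set $\Omega$. A linear prevision is the expectation functional $P(f)=\sum_{x}p(x)f(x)$ of a probability mass vector $p$. A lower prevision $\underline{P}$ on a set of gambles $\mathcal H$ is coherent if there is a nonempty closed convex set $\mathcal C$ of linear previsions with $\underline{P}(f)=\min_{P\in\mathcal C}P(f)$ for all $f\in\mathcal H$. Since $\mathcal K$ is finite, $\mathcal M$ is a convex polytope and each $\mathcal M_f$ is a face of it with finitely many extreme points. *)

theory Defs
  imports "HOL-Analysis.Analysis"
begin

text \<open>Probability mass vectors are elements of real^'a (Euclidean space, so that
  closedness, convexity and extreme points are the library notions).\<close>

definition pmfs :: "(real ^ 'a::finite) set" where
  "pmfs = {p. (\<forall>x. 0 \<le> p $ x) \<and> (\<Sum>x\<in>UNIV. p $ x) = 1}"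

definition prev :: "real ^ 'a::finite \<Rightarrow> ('a \<Rightarrow> real) \<Rightarrow> real" where
  "prev p f = (\<Sum>x\<in>UNIV. p $ x * f x)"

definition coherent_on :: "('a::finite \<Rightarrow> real) set \<Rightarrow> (('a \<Rightarrow> real) \<Rightarrow> real) \<Rightarrow> bool" where
  "coherent_on H LP \<longleftrightarrow>
     (\<exists>C. C \<noteq> {} \<and> closed C \<and> convex C \<and> C \<subseteq> pmfs \<and>
        (\<forall>f\<in>H. (\<exists>p\<in>C. prev p f = LP f) \<and> (\<forall>p\<in>C. LP f \<le> prev p f)))"

definition credal :: "('a::finite \<Rightarrow> real) set \<Rightarrow> (('a \<Rightarrow> real) \<Rightarrow> real) \<Rightarrow> (real ^ 'a) set" where
  "credal K LP = {p \<in> pmfs. \<forall>f\<in>K. LP f \<le> prev p f}"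

definition natext :: "('a::finite \<Rightarrow> real) set \<Rightarrow> (('a \<Rightarrow> real) \<Rightarrow> real) \<Rightarrow> ('a \<Rightarrow> real) \<Rightarrow> real" where
  "natext K LP h = Inf ((\<lambda>p. prev p h) ` credal K LP)"

definition face_f :: "('a::finite \<Rightarrow> real) set \<Rightarrow> (('a \<Rightarrow> real) \<Rightarrow> real) \<Rightarrow> ('a \<Rightarrow> real) \<Rightarrow> (real ^ 'a) set" where
  "face_f K LP f = {p \<in> credal K LP. prev p f = natext K LP f}"

definition extr_f :: "('a::finite \<Rightarrow> real) set \<Rightarrow> (('a \<Rightarrow> real) \<Rightarrow> real) \<Rightarrow> ('a \<Rightarrow> real) \<Rightarrow> (real ^ 'a) set" where
  "extr_f K LP f = {p. p extreme_point_of (face_f K LP f)}"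

end

theory Submission
  imports Defs
begin

lemma prev_inner: "prev p g = inner p (\<chi> x. g x)"
  by (simp add: prev_def inner_vec_def)

lemma prev_cont: "continuous_on S (\<lambda>p. prev p g)"
  unfolding prev_inner by (intro continuous_intros)

lemma one_inner: "inner (\<chi> x. 1) (p::real^'a::finite) = sum (($) p) UNIV"
  by (simp add: inner_vec_def)

lemma pmfs_closed: "closed (pmfs :: (real^'a::finite) set)"
proof -
  have eq: "pmfs = (\<Inter>x. {p::real^'a. inner (axis x 1) p \<ge> 0}) \<inter> {p. inner (\<chi> x. 1) p = 1}"
    by (auto simp: pmfs_def inner_axis' one_inner)
  show ?thesis by (subst eq) (intro closed_Int closed_INT ballI closed_halfspace_ge closed_hyperplane)
qed

lemma pmfs_convex: "convex (pmfs :: (real^'a::finite) set)"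
proof -
  have eq: "pmfs = (\<Inter>x. {p::real^'a. inner (axis x 1) p \<ge> 0}) \<inter> {p. inner (\<chi> x. 1) p = 1}"
    by (auto simp: pmfs_def inner_axis' one_inner)
  show ?thesis by (subst eq) (intro convex_Int convex_INT ballI convex_halfspace_ge convex_hyperplane)
qed

lemma pmfs_bounded: "bounded (pmfs :: (real^'a::finite) set)"
proof -
  have "norm p \<le> 1" if "p \<in> pmfs" for p :: "real^'a"
  proof -
    have "norm p \<le> sum (\<lambda>i. \<bar>p$i\<bar>) UNIV" by (rule norm_le_l1_cart)
    also have "\<dots> = 1" using that by (simp add: pmfs_def)
    finally show ?thesis .
  qed
  thus ?thesis unfolding bounded_iff by blast
qed

lemma credal_eq: "credal K LP = pmfs \<inter> (\<Inter>f\<in>K. {p. inner (\<chi> x. f x) p \<ge> LP f})"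
  by (auto simp: credal_def prev_inner inner_commute)

lemma credal_closed: "closed (credal K LP)"
  unfolding credal_eq by (intro closed_Int pmfs_closed closed_INT ballI closed_halfspace_ge)

lemma credal_convex: "convex (credal K LP)"
  unfolding credal_eq by (intro convex_Int pmfs_convex convex_INT ballI convex_halfspace_ge)

lemma credal_compact: "compact (credal K LP)"
proof -
  have "credal K LP \<subseteq> pmfs" by (auto simp: credal_def)
  hence "bounded (credal K LP)" using pmfs_bounded by (rule bounded_subset[rotated])
  thus ?thesis using credal_closed by (simp add: compact_eq_bounded_closed)
qed

lemma face_eq: "face_f K LP f = credal K LP \<inter> {p. inner (\<chi> x. f x) p = natext K LP f}"
  by (auto simp: face_f_def prev_inner inner_commute)

lemma face_compact: "compact (face_f K LP f)"
  unfolding face_eq by (intro compact_Int_closed credal_compact closed_hyperplane)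

lemma face_convex: "convex (face_f K LP f)"
  unfolding face_eq by (intro convex_Int credal_convex convex_hyperplane)

lemma img_compact: "compact S \<Longrightarrow> compact ((\<lambda>p. prev p g) ` S)"
  by (intro compact_continuous_image prev_cont)

lemma img_bdd: "compact S \<Longrightarrow> bdd_above ((\<lambda>p. prev p g) ` S)"
proof -
  assume "compact S"
  then have "compact ((\<lambda>p. prev p g) ` S)" by (rule img_compact)
  then show ?thesis by (intro bounded_imp_bdd_above compact_imp_bounded)
qed

lemma attains_inf:
  assumes "compact S" "S \<noteq> {}"
  shows "\<exists>p\<in>S. prev p g = Inf ((\<lambda>p. prev p g) ` S) \<and> (\<forall>q\<in>S. Inf ((\<lambda>p. prev p g) ` S) \<le> prev q g)"
proof -
  obtain p where p: "p \<in> S" "\<forall>q\<in>S. prev p g \<le> prev q g"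
    using compact_attains_inf[OF img_compact[OF assms(1)]] assms(2) by fastforce
  have "Inf ((\<lambda>p. prev p g) ` S) = prev p g"
    by (rule cInf_eq_minimum) (use p in auto)
  thus ?thesis using p by auto
qed

lemma attains_sup:
  assumes "compact S" "S \<noteq> {}"
  shows "\<exists>p\<in>S. prev p g = Sup ((\<lambda>p. prev p g) ` S)"
proof -
  obtain p where p: "p \<in> S" "\<forall>q\<in>S. prev q g \<le> prev p g"
    using compact_attains_sup[OF img_compact[OF assms(1)]] assms(2) by fastforce
  have "Sup ((\<lambda>p. prev p g) ` S) = prev p g"
    by (rule cSup_eq_maximum) (use p in auto)
  thus ?thesis using p by auto
qed

lemma extr_sup:
  shows "Sup ((\<lambda>p. prev p h) ` extr_f K LP f) = Sup ((\<lambda>p. prev p h) ` face_f K LP f)"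
proof (cases "face_f K LP f = {}")
  case True
  then have "extr_f K LP f = {}" by (auto simp: extr_f_def extreme_point_of_def)
  with True show ?thesis by simp
next
  case False
  let ?S = "face_f K LP f" and ?E = "extr_f K LP f"
  have KM: "?S = convex hull ?E"
    unfolding extr_f_def by (rule Krein_Milman_Minkowski[OF face_compact face_convex])
  have ES: "?E \<subseteq> ?S" by (auto simp: extr_f_def extreme_point_of_def)
  have En: "?E \<noteq> {}" using KM False by auto
  have bE: "bdd_above ((\<lambda>p. prev p h) ` ?E)"
    using img_bdd[where g=h, OF face_compact] ES by (meson bdd_above_mono image_mono)
  define c where "c = Sup ((\<lambda>p. prev p h) ` ?E)"
  have "?E \<subseteq> {p. inner (\<chi> x. h x) p \<le> c}"
    using bE by (auto simp: c_def prev_inner inner_commute intro!: cSup_upper)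
  hence "convex hull ?E \<subseteq> {p. inner (\<chi> x. h x) p \<le> c}"
    by (intro hull_minimal convex_halfspace_le)
  hence "\<forall>p\<in>?S. prev p h \<le> c" using KM by (auto simp: prev_inner inner_commute)
  hence "Sup ((\<lambda>p. prev p h) ` ?S) \<le> c" using False by (intro cSup_least) auto
  moreover have "c \<le> Sup ((\<lambda>p. prev p h) ` ?S)"
    unfolding c_def using En ES
    by (intro cSup_subset_mono img_bdd face_compact image_mono) auto
  ultimately show ?thesis unfolding c_def by simp
qed


lemma natext_K:
  assumes "coherent_on K LPK" "f \<in> K"
  shows "natext K LPK f = LPK f" and "face_f K LPK f \<noteq> {}"
proof -
  obtain C where C: "C \<noteq> {}" "C \<subseteq> pmfs"
    "\<forall>f\<in>K. (\<exists>p\<in>C. prev p f = LPK f) \<and> (\<forall>p\<in>C. LPK f \<le> prev p f)"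
    using assms(1) unfolding coherent_on_def by blast
  obtain p where p: "p \<in> C" "prev p f = LPK f" using C(3) assms(2) by blast
  have pc: "p \<in> credal K LPK" using p(1) C by (auto simp: credal_def)
  have "Inf ((\<lambda>p. prev p f) ` credal K LPK) = LPK f"
  proof (rule cInf_eq_minimum)
    show "LPK f \<in> (\<lambda>p. prev p f) ` credal K LPK" using pc p(2) by (intro image_eqI[where x=p]) auto
  qed (use assms(2) in \<open>auto simp: credal_def\<close>)
  thus e: "natext K LPK f = LPK f" by (simp add: natext_def)
  show "face_f K LPK f \<noteq> {}" using pc p e by (auto simp: face_f_def)
qed

lemma part1:
  assumes "coherent_on K LPK" "coherent_on UNIV LP" "\<forall>f\<in>K. LP f = LPK f" "f \<in> K"
  shows "LP h \<le> Sup ((\<lambda>p. prev p h) ` face_f K LPK f)"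
proof -
  obtain C where C: "C \<subseteq> pmfs"
    "\<forall>f. (\<exists>p\<in>C. prev p f = LP f) \<and> (\<forall>p\<in>C. LP f \<le> prev p f)"
    using assms(2) unfolding coherent_on_def by blast
  obtain p where p: "p \<in> C" "prev p f = LP f" using C(2) by blast
  have "\<forall>g\<in>K. LPK g \<le> prev p g" using C(2) p(1) assms(3) by metis
  hence "p \<in> credal K LPK" using p(1) C(1) by (auto simp: credal_def)
  hence pf: "p \<in> face_f K LPK f" using p assms natext_K(1)[OF assms(1,4)] by (auto simp: face_f_def)
  have "LP h \<le> prev p h" using C p by blast
  also have "\<dots> \<le> Sup ((\<lambda>p. prev p h) ` face_f K LPK f)"
    using pf by (intro cSup_upper img_bdd face_compact) auto
  finally show ?thesis .
qed

lemma part3: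
  assumes "finite K" "K \<noteq> {}" "coherent_on K LPK"
  shows "\<exists>LP'. coherent_on UNIV LP' \<and> (\<forall>f\<in>K. LP' f = LPK f) \<and>
        LP' h = Min ((\<lambda>f. Sup ((\<lambda>p. prev p h) ` face_f K LPK f)) ` K)"
proof -
  define m where "m f = Sup ((\<lambda>p. prev p h) ` face_f K LPK f)" for f
  have "\<forall>f\<in>K. \<exists>p\<in>face_f K LPK f. prev p h = m f"
    unfolding m_def using natext_K(2)[OF assms(3)] by (auto intro!: attains_sup face_compact)
  then obtain pk where pk: "\<And>f. f \<in> K \<Longrightarrow> pk f \<in> face_f K LPK f \<and> prev (pk f) h = m f"
    by metis
  define C where "C = convex hull (pk ` K)"
  have Cc: "compact C" unfolding C_def using assms(1)
    by (intro finite_imp_compact_convex_hull) auto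
  have Cn: "C \<noteq> {}" unfolding C_def using assms(2) by auto
  have "pk ` K \<subseteq> credal K LPK" using pk by (auto simp: face_f_def)
  hence Ccr: "C \<subseteq> credal K LPK" unfolding C_def by (intro hull_minimal credal_convex)
  define LP' where "LP' g = Inf ((\<lambda>p. prev p g) ` C)" for g
  have att: "\<exists>p\<in>C. prev p g = LP' g \<and> (\<forall>q\<in>C. LP' g \<le> prev q g)" for g
    unfolding LP'_def using attains_inf[OF Cc Cn] by blast
  have coh: "coherent_on UNIV LP'" unfolding coherent_on_def
  proof (intro exI[of _ C] conjI)
    show "closed C" using Cc by (rule compact_imp_closed)
    show "convex C" unfolding C_def by simp
    show "C \<subseteq> pmfs" using Ccr by (auto simp: credal_def)
  qed (use Cn att in auto)
  have agree: "LP' f = LPK f" if f: "f \<in> K" for f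
  proof -
    have "pk f \<in> C" unfolding C_def using f by (auto intro: hull_inc)
    moreover have "prev (pk f) f = LPK f"
      using pk[OF f] natext_K[OF assms(3) f] by (auto simp: face_f_def)
    moreover have "\<forall>q\<in>C. LPK f \<le> prev q f" using Ccr f by (auto simp: credal_def)
    ultimately show ?thesis unfolding LP'_def
      by (intro cInf_eq_minimum image_eqI[where x="pk f"]) auto
  qed
  define m0 where "m0 = Min (m ` K)"
  obtain f0 where f0: "f0 \<in> K" "m0 = m f0"
  proof -
    have "Min (m ` K) \<in> m ` K" using assms(1,2) by (intro Min_in) auto
    then show ?thesis using that unfolding m0_def by blast
  qed
  have "pk ` K \<subseteq> {p. inner (\<chi> x. h x) p \<ge> m0}"
    using pk assms(1) by (auto simp: m0_def prev_inner inner_commute)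
  hence "C \<subseteq> {p. inner (\<chi> x. h x) p \<ge> m0}" unfolding C_def
    by (intro hull_minimal convex_halfspace_ge)
  hence lb: "\<forall>q\<in>C. m0 \<le> prev q h" by (auto simp: prev_inner inner_commute)
  have "pk f0 \<in> C" unfolding C_def using f0 by (auto intro: hull_inc)
  hence "LP' h = m0" unfolding LP'_def
    using lb pk[OF f0(1)] f0(2) by (intro cInf_eq_minimum image_eqI[where x="pk f0"]) auto
  thus ?thesis using coh agree unfolding m0_def m_def by blast
qed

theorem corollary5:
  fixes K :: "('a::finite \<Rightarrow> real) set"
    and LPK :: "('a \<Rightarrow> real) \<Rightarrow> real"
  assumes "finite K" and "K \<noteq> {}" and "coherent_on K LPK"
  shows
    "(\<forall>LP h. coherent_on UNIV LP \<and> (\<forall>f\<in>K. LP f = LPK f) \<longrightarrow>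
        (\<forall>f\<in>K. LP h \<le> Sup ((\<lambda>p. prev p h) ` face_f K LPK f)))
   \<and> (\<forall>LP h. coherent_on UNIV LP \<and> (\<forall>f\<in>K. LP f = LPK f) \<longrightarrow>
        LP h \<le> Min ((\<lambda>f. Sup ((\<lambda>p. prev p h) ` face_f K LPK f)) ` K))
   \<and> (\<forall>h. \<exists>LP'. coherent_on UNIV LP' \<and> (\<forall>f\<in>K. LP' f = LPK f) \<and>
        LP' h = Min ((\<lambda>f. Sup ((\<lambda>p. prev p h) ` face_f K LPK f)) ` K))
   \<and> (\<forall>LP h. coherent_on UNIV LP \<and> (\<forall>f\<in>K. LP f = LPK f) \<longrightarrow>
        LP h \<le> Min ((\<lambda>f. Sup ((\<lambda>p. prev p h) ` extr_f K LPK f)) ` K))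
   \<and> (\<forall>h. \<exists>LP'. coherent_on UNIV LP' \<and> (\<forall>f\<in>K. LP' f = LPK f) \<and>
        LP' h = Min ((\<lambda>f. Sup ((\<lambda>p. prev p h) ` extr_f K LPK f)) ` K))"
proof -
  have ex: "(\<lambda>f. Sup ((\<lambda>p. prev p h) ` extr_f K LPK f)) = (\<lambda>f. Sup ((\<lambda>p. prev p h) ` face_f K LPK f))" for h
    by (rule ext) (rule extr_sup)
  have p2: "LP h \<le> Min ((\<lambda>f. Sup ((\<lambda>p. prev p h) ` face_f K LPK f)) ` K)"
    if "coherent_on UNIV LP" "\<forall>f\<in>K. LP f = LPK f" for LP h
    using part1[OF assms(3) that] assms(1,2) by (simp add: Min_ge_iff)
  show ?thesis unfolding ex using part1[OF assms(3)] p2 part3[OF assms] by blast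
qed

end
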